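(* Let $G = K_m \otimes K_n$ with $m \geq 3$ and $m \leq n \leq 2m-2$. Then $\dim(G) = \left\lceil \frac{2}{3}(m+n-2) \right\rceil$.
   Context: $K_r$ is the complete graph on $r$ vertices. The tensor product $G\otimes H$ has vertex set $V(G)\times V(H)$, with $(u,v)$ adjacent to $(x,y)$ iff $ux\in E(G)$ and $vy\in E(H)$. For a connected graph and an ordered set $W=\{w_1,\dots,w_k\}$ of vertices, $r(v\mid W)=(d(v,w_1),\dots,d(v,w_k))$; $W$ is resolving if distinct vertices have distinct representations; $\dim(G)$ is the minimum size of a resolving set. *)

theory Defs
  imports Complex_Main
begin

text \<open>A (simple) graph is given by a vertex set V and a symmetric adjacency relation E.\<close>

definition complete_verts :: "nat \<Rightarrow> nat set" where
  "complete_verts r = {0..<r}"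

definition complete_adj :: "nat \<Rightarrow> nat \<Rightarrow> bool" where
  "complete_adj u v \<longleftrightarrow> u \<noteq> v"

definition tensor_verts :: "'a set \<Rightarrow> 'b set \<Rightarrow> ('a \<times> 'b) set" where
  "tensor_verts V1 V2 = V1 \<times> V2"

definition tensor_adj :: "('a \<Rightarrow> 'a \<Rightarrow> bool) \<Rightarrow> ('b \<Rightarrow> 'b \<Rightarrow> bool)
    \<Rightarrow> ('a \<times> 'b) \<Rightarrow> ('a \<times> 'b) \<Rightarrow> bool" where
  "tensor_adj E1 E2 p q \<longleftrightarrow> E1 (fst p) (fst q) \<and> E2 (snd p) (snd q)"

definition is_walk :: "'a set \<Rightarrow> ('a \<Rightarrow> 'a \<Rightarrow> bool) \<Rightarrow> 'a list \<Rightarrow> bool" where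
  "is_walk V E xs \<longleftrightarrow> xs \<noteq> [] \<and> set xs \<subseteq> V \<and>
     (\<forall>i. Suc i < length xs \<longrightarrow> E (xs ! i) (xs ! Suc i))"

definition gdist :: "'a set \<Rightarrow> ('a \<Rightarrow> 'a \<Rightarrow> bool) \<Rightarrow> 'a \<Rightarrow> 'a \<Rightarrow> nat" where
  "gdist V E u v = (LEAST k. \<exists>xs. is_walk V E xs \<and> hd xs = u \<and> last xs = v \<and> length xs = Suc k)"

definition connected_graph :: "'a set \<Rightarrow> ('a \<Rightarrow> 'a \<Rightarrow> bool) \<Rightarrow> bool" where
  "connected_graph V E \<longleftrightarrow> V \<noteq> {} \<and>
     (\<forall>u\<in>V. \<forall>v\<in>V. \<exists>xs. is_walk V E xs \<and> hd xs = u \<and> last xs = v)"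

definition resolving :: "'a set \<Rightarrow> ('a \<Rightarrow> 'a \<Rightarrow> bool) \<Rightarrow> 'a set \<Rightarrow> bool" where
  "resolving V E W \<longleftrightarrow> W \<subseteq> V \<and>
     (\<forall>x\<in>V. \<forall>y\<in>V. (\<forall>w\<in>W. gdist V E x w = gdist V E y w) \<longrightarrow> x = y)"

definition metric_dim :: "'a set \<Rightarrow> ('a \<Rightarrow> 'a \<Rightarrow> bool) \<Rightarrow> nat" where
  "metric_dim V E = (LEAST k. \<exists>W. finite W \<and> card W = k \<and> resolving V E W)"

end

theory Submission
  imports Defs
begin


definition DD :: "nat \<times> nat \<Rightarrow> nat \<times> nat \<Rightarrow> nat" where
  "DD x y = (if x = y then 0 else if fst x \<noteq> fst y \<and> snd x \<noteq> snd y then 1 else 2)"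

lemma E_simp: "tensor_adj complete_adj complete_adj p q \<longleftrightarrow> fst p \<noteq> fst q \<and> snd p \<noteq> snd q"
  by (simp add: tensor_adj_def complete_adj_def)

lemma V_simp: "tensor_verts (complete_verts m) (complete_verts n) = {0..<m}\<times>{0..<n}"
  by (simp add: tensor_verts_def complete_verts_def)

lemma third: "(m::nat) \<ge> 3 \<Longrightarrow> \<exists>p<m. p \<noteq> a \<and> p \<noteq> c"
proof -
  assume "m \<ge> 3"
  have "\<exists>p\<in>{0,1,2::nat}. p \<noteq> a \<and> p \<noteq> c" by auto
  then show ?thesis using \<open>m \<ge> 3\<close> by force
qed

lemma gdist_eq:
  assumes m: "m \<ge> 3" and n: "n \<ge> 3"
    and x: "x \<in> {0..<m}\<times>{0..<n}" and y: "y \<in> {0..<m}\<times>{0..<n}"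
  shows "gdist (tensor_verts (complete_verts m) (complete_verts n))
                (tensor_adj complete_adj complete_adj) x y = DD x y"
proof -
  let ?V = "{0..<m}\<times>{0..<n}"
  let ?E = "tensor_adj complete_adj complete_adj"
  let ?P = "\<lambda>k. \<exists>xs. is_walk ?V ?E xs \<and> hd xs = x \<and> last xs = y \<and> length xs = Suc k"
  have g: "gdist (tensor_verts (complete_verts m) (complete_verts n)) ?E x y = (LEAST k. ?P k)"
    by (simp add: gdist_def V_simp)
  have P0: "?P 0 \<Longrightarrow> x = y"
    by (auto simp: length_Suc_conv)
  have P1: "?P 1 \<Longrightarrow> fst x \<noteq> fst y \<and> snd x \<noteq> snd y"
    by (auto simp: length_Suc_conv is_walk_def E_simp)
  show ?thesis
  proof (cases "x = y")
    case True
    have "?P 0" using x True by (intro exI[of _ "[x]"]) (auto simp: is_walk_def)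
    then show ?thesis using True g by (simp add: DD_def)
  next
    case False
    show ?thesis
    proof (cases "fst x \<noteq> fst y \<and> snd x \<noteq> snd y")
      case True
      have "?P 1" using x y True
        by (intro exI[of _ "[x,y]"]) (auto simp: is_walk_def E_simp less_Suc_eq)
      moreover have "\<And>k. ?P k \<Longrightarrow> 1 \<le> k"
      proof -
        fix k assume "?P k" then show "1 \<le> k" using P0 False by (cases k) auto
      qed
      ultimately have "(LEAST k. ?P k) = 1" by (intro Least_equality) auto
      then show ?thesis using g True False by (simp add: DD_def)
    next
      case nt: False
      obtain p where p: "p < m" "p \<noteq> fst x" "p \<noteq> fst y" using third[OF m] by blast
      obtain q where q: "q < n" "q \<noteq> snd x" "q \<noteq> snd y" using third[OF n] by blast
      have "?P 2" using x y p q
        by (intro exI[of _ "[x,(p,q),y]"]) (auto simp: is_walk_def E_simp less_Suc_eq)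
      moreover have "\<And>k. ?P k \<Longrightarrow> 2 \<le> k"
      proof -
        fix k assume "?P k" then show "2 \<le> k" using P0 P1 False nt
          by (cases k; cases "k - 1") auto
      qed
      ultimately have "(LEAST k. ?P k) = 2" by (intro Least_equality) auto
      then show ?thesis using g nt False by (simp add: DD_def)
    qed
  qed
qed



lemma suff:
  assumes WV: "W \<subseteq> {0..<m}\<times>{0..<n}"
    and rows: "\<And>i i'. i < m \<Longrightarrow> i' < m \<Longrightarrow> (\<forall>w\<in>W. fst w \<noteq> i) \<Longrightarrow> (\<forall>w\<in>W. fst w \<noteq> i') \<Longrightarrow> i = i'"
    and cols: "\<And>j j'. j < n \<Longrightarrow> j' < n \<Longrightarrow> (\<forall>w\<in>W. snd w \<noteq> j) \<Longrightarrow> (\<forall>w\<in>W. snd w \<noteq> j') \<Longrightarrow> j = j'"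
    and noiso: "\<And>w. w \<in> W \<Longrightarrow> \<exists>w'\<in>W. w' \<noteq> w \<and> (fst w' = fst w \<or> snd w' = snd w)"
    and x: "x \<in> {0..<m}\<times>{0..<n}" and y: "y \<in> {0..<m}\<times>{0..<n}"
    and eq: "\<forall>w\<in>W. DD x w = DD y w"
  shows "x = y"
proof (rule ccontr)
  assume ne: "x \<noteq> y"
  have xW: "x \<notin> W"
  proof
    assume "x \<in> W" then have "DD x x = DD y x" using eq by blast
    then show False using ne by (simp add: DD_def split: if_splits)
  qed
  have yW: "y \<notin> W"
  proof
    assume "y \<in> W" then have "DD x y = DD y y" using eq by blast
    then show False using ne by (simp add: DD_def split: if_splits)
  qed
  obtain a b c d where xy: "x = (a,b)" "y = (c,d)" by (cases x, cases y) auto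
  have H: "\<And>p q. (p,q) \<in> W \<Longrightarrow> (p = a \<or> q = b) \<longleftrightarrow> (p = c \<or> q = d)"
  proof -
    fix p q assume pq: "(p,q) \<in> W"
    then have "DD (a,b) (p,q) = DD (c,d) (p,q)" using eq xy by auto
    moreover have "(a,b) \<noteq> (p,q)" "(c,d) \<noteq> (p,q)" using pq xW yW xy by auto
    ultimately show "(p = a \<or> q = b) \<longleftrightarrow> (p = c \<or> q = d)"
      by (auto simp: DD_def split: if_splits)
  qed
  have ab: "a < m" "b < n" "c < m" "d < n" using x y xy by auto
  show False
  proof (cases "a = c")
    case True
    have bd: "b \<noteq> d" using ne xy True by auto
    then obtain w where w: "w \<in> W" "snd w = b \<or> snd w = d" using cols[of b d] ab by blast
    then obtain p q where pq: "w = (p,q)" by (cases w)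
    show False using H[of p q] w pq True xW yW xy bd by auto
  next
    case ac: False
    show ?thesis
    proof (cases "b = d")
      case True
      obtain w where w: "w \<in> W" "fst w = a \<or> fst w = c" using rows[of a c] ab ac by blast
      then obtain p q where pq: "w = (p,q)" by (cases w)
      show False using H[of p q] w pq True xW yW xy ac by auto
    next
      case bd: False
      have ra: "\<forall>w\<in>W. fst w \<noteq> a"
      proof (intro ballI notI)
        fix w assume w: "w \<in> W" "fst w = a"
        obtain p q where pq: "w = (p,q)" by (cases w)
        have wq: "q = d" using H[of p q] w pq ac by auto
        obtain w' where w': "w' \<in> W" "w' \<noteq> w" "fst w' = fst w \<or> snd w' = snd w" using noiso[OF w(1)] by blast
        obtain p' q' where pq': "w' = (p',q')" by (cases w')
        show False using H[of p' q'] w' pq' w pq wq ac bd by auto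
      qed
      have rc: "\<forall>w\<in>W. fst w \<noteq> c"
      proof (intro ballI notI)
        fix w assume w: "w \<in> W" "fst w = c"
        obtain p q where pq: "w = (p,q)" by (cases w)
        have wq: "q = b" using H[of p q] w pq ac by auto
        obtain w' where w': "w' \<in> W" "w' \<noteq> w" "fst w' = fst w \<or> snd w' = snd w" using noiso[OF w(1)] by blast
        obtain p' q' where pq': "w' = (p',q')" by (cases w')
        show False using H[of p' q'] w' pq' w pq wq ac bd by auto
      qed
      show False using rows[OF ab(1) ab(3) ra rc] ac by simp
    qed
  qed
qed

lemma card1_eq: "card A = 1 \<Longrightarrow> a \<in> A \<Longrightarrow> b \<in> A \<Longrightarrow> a = b"
  by (metis card_1_singletonE singletonD)



lemma arith_aux: "2*A + 2*B \<le> (X::nat) + t \<Longrightarrow> A + r = m \<Longrightarrow> B + c = n \<Longrightarrow> t + 2*r + 2*c \<le> 4 \<Longrightarrow> 2*(m+n) \<le> X + 4"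
  by presburger

lemma lower:
  assumes WV: "W \<subseteq> {0..<m}\<times>{0..<n}" and n1: "n \<ge> 1" and m1: "m \<ge> 1"
    and res: "\<And>x y. x \<in> {0..<m}\<times>{0..<n} \<Longrightarrow> y \<in> {0..<m}\<times>{0..<n} \<Longrightarrow> (\<forall>w\<in>W. DD x w = DD y w) \<Longrightarrow> x = y"
  shows "2*(m+n) \<le> 3 * card W + 4"
proof -
  have fW: "finite W" using WV finite_subset by blast
  define degr where "degr i = card {w\<in>W. fst w = i}" for i
  define degc where "degc j = card {w\<in>W. snd w = j}" for j
  define gr where "gr i = (if degr i = 1 then 2 else (1::nat))" for i
  define gc where "gc j = (if degc j = 1 then 2 else (1::nat))" for j
  define ER where "ER = {i\<in>{..<m}. \<forall>w\<in>W. fst w \<noteq> i}"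
  define EC where "EC = {j\<in>{..<n}. \<forall>w\<in>W. snd w \<noteq> j}"
  define T where "T = {w\<in>W. degr (fst w) = 1 \<and> degc (snd w) = 1}"
  have fER: "finite ER" "finite EC" "finite T" using fW by (auto simp: ER_def EC_def T_def)
  have F1: "card ER \<le> 1"
  proof -
    have "\<forall>a1\<in>ER. \<forall>a2\<in>ER. a1 = a2"
    proof (intro ballI)
      fix i i' assume ii: "i \<in> ER" "i' \<in> ER"
      have "(i,0::nat) = (i',0::nat)"
      proof (rule res)
        show "(i,0::nat) \<in> {0..<m}\<times>{0..<n}" "(i',0::nat) \<in> {0..<m}\<times>{0..<n}" using ii n1 by (auto simp: ER_def)
        show "\<forall>w\<in>W. DD (i,0::nat) w = DD (i',0::nat) w" using ii by (auto simp: ER_def DD_def)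
      qed
      then show "i = i'" by simp
    qed
    then show ?thesis using card_le_Suc0_iff_eq[OF fER(1)] by simp
  qed
  have F2: "card EC \<le> 1"
  proof -
    have "\<forall>a1\<in>EC. \<forall>a2\<in>EC. a1 = a2"
    proof (intro ballI)
      fix i i' assume ii: "i \<in> EC" "i' \<in> EC"
      have "(0::nat,i) = (0::nat,i')"
      proof (rule res)
        show "(0::nat,i) \<in> {0..<m}\<times>{0..<n}" "(0::nat,i') \<in> {0..<m}\<times>{0..<n}" using ii m1 by (auto simp: EC_def)
        show "\<forall>w\<in>W. DD (0::nat,i) w = DD (0::nat,i') w" using ii by (auto simp: EC_def DD_def)
      qed
      then show "i = i'" by simp
    qed
    then show ?thesis using card_le_Suc0_iff_eq[OF fER(2)] by simp
  qed
  have rowuniq: "\<And>w w'. w \<in> W \<Longrightarrow> w' \<in> W \<Longrightarrow> degr (fst w) = 1 \<Longrightarrow> fst w' = fst w \<Longrightarrow> w' = w"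
  proof -
    fix w w' assume a: "w \<in> W" "w' \<in> W" "degr (fst w) = 1" "fst w' = fst w"
    show "w' = w" using card1_eq[of "{v\<in>W. fst v = fst w}" w' w] a unfolding degr_def by auto
  qed
  have coluniq: "\<And>w w'. w \<in> W \<Longrightarrow> w' \<in> W \<Longrightarrow> degc (snd w) = 1 \<Longrightarrow> snd w' = snd w \<Longrightarrow> w' = w"
  proof -
    fix w w' assume a: "w \<in> W" "w' \<in> W" "degc (snd w) = 1" "snd w' = snd w"
    show "w' = w" using card1_eq[of "{v\<in>W. snd v = snd w}" w' w] a unfolding degc_def by auto
  qed
  have F3: "card T \<le> 1"
  proof -
    have "\<forall>a1\<in>T. \<forall>a2\<in>T. a1 = a2"
    proof (intro ballI, rule ccontr)
      fix w1 w2 assume ww: "w1 \<in> T" "w2 \<in> T" "w1 \<noteq> w2"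
      obtain a d where w1: "w1 = (a,d)" by (cases w1)
      obtain c b where w2: "w2 = (c,b)" by (cases w2)
      have W12: "w1 \<in> W" "w2 \<in> W" "degr a = 1" "degc d = 1" "degr c = 1" "degc b = 1"
        using ww w1 w2 by (auto simp: T_def)
      have ac: "a \<noteq> c" using rowuniq[of w1 w2] W12 w1 w2 ww by auto
      have bd: "b \<noteq> d" using coluniq[of w1 w2] W12 w1 w2 ww by auto
      have r: "\<And>w. w \<in> W \<Longrightarrow> fst w = a \<or> snd w = d \<Longrightarrow> w = w1"
        proof -
 fix w assume "w \<in> W" "fst w = a \<or> snd w = d"
 then show "w = w1" using rowuniq[of w1 w] coluniq[of w1 w] W12 w1 by auto
 qed
      have r2: "\<And>w. w \<in> W \<Longrightarrow> fst w = c \<or> snd w = b \<Longrightarrow> w = w2"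
        proof -
 fix w assume "w \<in> W" "fst w = c \<or> snd w = b"
 then show "w = w2" using rowuniq[of w2 w] coluniq[of w2 w] W12 w2 by auto
 qed
      have "(a,b) = (c,d)"
      proof (rule res)
        show "(a,b) \<in> {0..<m}\<times>{0..<n}" "(c,d) \<in> {0..<m}\<times>{0..<n}" using W12 WV w1 w2 by auto
        show "\<forall>w\<in>W. DD (a,b) w = DD (c,d) w"
        proof
          fix w assume wW: "w \<in> W"
          show "DD (a,b) w = DD (c,d) w"
          proof (cases "w = w1 \<or> w = w2")
            case True then show ?thesis using w1 w2 ac bd by (auto simp: DD_def)
          next
            case False
            then have "fst w \<noteq> a" "snd w \<noteq> d" "fst w \<noteq> c" "snd w \<noteq> b" using r[OF wW] r2[OF wW] by auto
            then show ?thesis by (auto simp: DD_def)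
          qed
        qed
      qed
      then show False using ac by simp
    qed
    then show ?thesis using card_le_Suc0_iff_eq[OF fER(3)] by simp
  qed
  have F4: "T \<noteq> {} \<Longrightarrow> ER = {} \<or> EC = {}"
  proof (rule ccontr)
    assume "T \<noteq> {}" "\<not> (ER = {} \<or> EC = {})"
    then obtain w1 c b where ww: "w1 \<in> T" "c \<in> ER" "b \<in> EC" by blast
    obtain a d where w1: "w1 = (a,d)" by (cases w1)
    have W12: "w1 \<in> W" "degr a = 1" "degc d = 1" using ww w1 by (auto simp: T_def)
    have cb: "c < m" "b < n" "\<forall>w\<in>W. fst w \<noteq> c" "\<forall>w\<in>W. snd w \<noteq> b" using ww by (auto simp: ER_def EC_def)
    have ac: "a \<noteq> c" "b \<noteq> d" using cb W12 w1 by auto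
    have r: "\<And>w. w \<in> W \<Longrightarrow> fst w = a \<or> snd w = d \<Longrightarrow> w = w1"
      proof -
 fix w assume "w \<in> W" "fst w = a \<or> snd w = d"
 then show "w = w1" using rowuniq[of w1 w] coluniq[of w1 w] W12 w1 by auto
 qed
    have "(a,b) = (c,d)"
    proof (rule res)
      show "(a,b) \<in> {0..<m}\<times>{0..<n}" "(c,d) \<in> {0..<m}\<times>{0..<n}" using W12 WV w1 cb by auto
      show "\<forall>w\<in>W. DD (a,b) w = DD (c,d) w"
      proof
        fix w assume wW: "w \<in> W"
        show "DD (a,b) w = DD (c,d) w"
        proof (cases "w = w1")
          case True then show ?thesis using w1 ac by (auto simp: DD_def)
        next
          case False
          then have "fst w \<noteq> a" "snd w \<noteq> d" "fst w \<noteq> c" "snd w \<noteq> b" using r[OF wW] cb wW by auto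
          then show ?thesis by (auto simp: DD_def)
        qed
      qed
    qed
    then show False using ac by simp
  qed
  have S1: "2 * card ({..<m} - ER) \<le> (\<Sum>w\<in>W. gr (fst w))"
  proof -
    have "2 * card ({..<m} - ER) = (\<Sum>i\<in>{..<m} - ER. 2)" by simp
    also have "\<dots> \<le> (\<Sum>i\<in>{..<m} - ER. degr i * gr i)"
    proof (rule sum_mono)
      fix i assume i: "i \<in> {..<m} - ER"
      then have "{w\<in>W. fst w = i} \<noteq> {}" by (auto simp: ER_def)
      moreover have "finite {w\<in>W. fst w = i}" using fW by auto
      ultimately have "degr i \<ge> 1" unfolding degr_def by (simp add: Suc_le_eq card_gt_0_iff)
      then show "2 \<le> degr i * gr i" by (cases "degr i = 1") (auto simp: gr_def)
    qed
    also have "\<dots> \<le> (\<Sum>i\<in>{..<m}. degr i * gr i)"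
      by (rule sum_mono2) auto
    also have "\<dots> = (\<Sum>i\<in>{..<m}. \<Sum>w\<in>{w\<in>W. fst w = i}. gr (fst w))"
      by (rule sum.cong) (auto simp: degr_def)
    also have "\<dots> = (\<Sum>w\<in>W. gr (fst w))"
      using sum.group[OF fW, of "{..<m}" fst "\<lambda>w. gr (fst w)"] WV by force
    finally show ?thesis .
  qed
  have S2: "2 * card ({..<n} - EC) \<le> (\<Sum>w\<in>W. gc (snd w))"
  proof -
    have "2 * card ({..<n} - EC) = (\<Sum>i\<in>{..<n} - EC. 2)" by simp
    also have "\<dots> \<le> (\<Sum>i\<in>{..<n} - EC. degc i * gc i)"
    proof (rule sum_mono)
      fix i assume i: "i \<in> {..<n} - EC"
      then have "{w\<in>W. snd w = i} \<noteq> {}" by (auto simp: EC_def)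
      moreover have "finite {w\<in>W. snd w = i}" using fW by auto
      ultimately have "degc i \<ge> 1" unfolding degc_def by (simp add: Suc_le_eq card_gt_0_iff)
      then show "2 \<le> degc i * gc i" by (cases "degc i = 1") (auto simp: gc_def)
    qed
    also have "\<dots> \<le> (\<Sum>i\<in>{..<n}. degc i * gc i)"
      by (rule sum_mono2) auto
    also have "\<dots> = (\<Sum>i\<in>{..<n}. \<Sum>w\<in>{w\<in>W. snd w = i}. gc (snd w))"
      by (rule sum.cong) (auto simp: degc_def)
    also have "\<dots> = (\<Sum>w\<in>W. gc (snd w))"
      using sum.group[OF fW, of "{..<n}" snd "\<lambda>w. gc (snd w)"] WV by force
    finally show ?thesis .
  qed
  have S3: "(\<Sum>w\<in>W. gr (fst w)) + (\<Sum>w\<in>W. gc (snd w)) \<le> 3 * card W + card T"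
  proof -
    have "(\<Sum>w\<in>W. gr (fst w)) + (\<Sum>w\<in>W. gc (snd w)) = (\<Sum>w\<in>W. gr (fst w) + gc (snd w))"
      by (simp add: sum.distrib)
    also have "\<dots> \<le> (\<Sum>w\<in>W. 3 + (if w \<in> T then 1 else 0))"
      by (rule sum_mono) (auto simp: gr_def gc_def T_def)
    also have "\<dots> = 3 * card W + card T"
      using fW by (simp add: sum.distrib sum.If_cases T_def Int_def)
    finally show ?thesis .
  qed
  have c1: "card ({..<m} - ER) = m - card ER"
    using card_Diff_subset[of ER "{..<m}"] fER by (auto simp: ER_def)
  have c2: "card ({..<n} - EC) = n - card EC"
    using card_Diff_subset[of EC "{..<n}"] fER by (auto simp: EC_def)
  have F4': "card T + 2 * card ER + 2 * card EC \<le> 4"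
  proof (cases "T = {}")
    case True then show ?thesis using F1 F2 by simp
  next
    case False then show ?thesis using F4 F1 F2 F3 by auto
  qed
  have e1: "m - card ER + card ER = m" using F1 m1 by simp
  have e2: "n - card EC + card EC = n" using F2 n1 by simp
  have "2 * (m - card ER) + 2 * (n - card EC) \<le> 3 * card W + card T"
    using S1 S2 S3 unfolding c1 c2 by linarith
  then show ?thesis using arith_aux e1 e2 F4' by blast
qed



definition good :: "nat \<Rightarrow> nat \<Rightarrow> (nat \<times> nat) set \<Rightarrow> bool" where
  "good M N W \<longleftrightarrow> W \<subseteq> {..<M}\<times>{..<N} \<and> (\<forall>i<M. \<exists>w\<in>W. fst w = i) \<and> (\<forall>j<N. \<exists>w\<in>W. snd w = j)
     \<and> (\<forall>w\<in>W. \<exists>w'\<in>W. w' \<noteq> w \<and> (fst w' = fst w \<or> snd w' = snd w))"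

lemma good_finite: "good M N W \<Longrightarrow> finite W"
  unfolding good_def by (meson finite_SigmaI finite_lessThan finite_subset)

lemma step1:
  assumes g: "good M N W"
  shows "good (M+2) (N+1) (insert (M,N) (insert (M+1,N) W)) \<and>
         card (insert (M,N) (insert (M+1,N) W)) = card W + 2"
proof
  have fW: "finite W" using good_finite[OF g] .
  have nW: "(M,N) \<notin> W" "(M+1,N) \<notin> W" using g by (auto simp: good_def)
  show "card (insert (M,N) (insert (M+1,N) W)) = card W + 2" using fW nW by simp
  show "good (M+2) (N+1) (insert (M,N) (insert (M+1,N) W))"
    unfolding good_def
  proof (intro conjI)
    show "insert (M,N) (insert (M+1,N) W) \<subseteq> {..<M+2}\<times>{..<N+1}" using g by (auto simp: good_def)
    show "\<forall>i<M+2. \<exists>w\<in>insert (M,N) (insert (M+1,N) W). fst w = i"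
    proof (intro allI impI)
      fix i assume "i < M+2"
      then consider "i < M" | "i = M" | "i = M+1" by linarith
      then show "\<exists>w\<in>insert (M,N) (insert (M+1,N) W). fst w = i"
        by cases (use g in \<open>auto simp: good_def\<close>)
    qed
    show "\<forall>j<N+1. \<exists>w\<in>insert (M,N) (insert (M+1,N) W). snd w = j"
    proof (intro allI impI)
      fix j assume "j < N+1"
      then consider "j < N" | "j = N" by linarith
      then show "\<exists>w\<in>insert (M,N) (insert (M+1,N) W). snd w = j"
        by cases (use g in \<open>auto simp: good_def\<close>)
    qed
    show "\<forall>w\<in>insert (M,N) (insert (M+1,N) W). \<exists>w'\<in>insert (M,N) (insert (M+1,N) W). w' \<noteq> w \<and> (fst w' = fst w \<or> snd w' = snd w)"
    proof
      fix w assume "w \<in> insert (M,N) (insert (M+1,N) W)"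
      then consider "w = (M,N)" | "w = (M+1,N)" | "w \<in> W" by blast
      then show "\<exists>w'\<in>insert (M,N) (insert (M+1,N) W). w' \<noteq> w \<and> (fst w' = fst w \<or> snd w' = snd w)"
      proof cases
        case 3
        then obtain w' where "w' \<in> W" "w' \<noteq> w \<and> (fst w' = fst w \<or> snd w' = snd w)"
          using g by (auto simp: good_def)
        then show ?thesis by blast
      qed auto
    qed
  qed
qed

lemma step2:
  assumes g: "good M N W"
  shows "good (M+1) (N+2) (insert (M,N) (insert (M,N+1) W)) \<and>
         card (insert (M,N) (insert (M,N+1) W)) = card W + 2"
proof
  have fW: "finite W" using good_finite[OF g] .
  have nW: "(M,N) \<notin> W" "(M,N+1) \<notin> W" using g by (auto simp: good_def)
  show "card (insert (M,N) (insert (M,N+1) W)) = card W + 2" using fW nW by simp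
  show "good (M+1) (N+2) (insert (M,N) (insert (M,N+1) W))"
    unfolding good_def
  proof (intro conjI)
    show "insert (M,N) (insert (M,N+1) W) \<subseteq> {..<M+1}\<times>{..<N+2}" using g by (auto simp: good_def)
    show "\<forall>i<M+1. \<exists>w\<in>insert (M,N) (insert (M,N+1) W). fst w = i"
    proof (intro allI impI)
      fix i assume "i < M+1"
      then consider "i < M" | "i = M" by linarith
      then show "\<exists>w\<in>insert (M,N) (insert (M,N+1) W). fst w = i"
        by cases (use g in \<open>auto simp: good_def\<close>)
    qed
    show "\<forall>j<N+2. \<exists>w\<in>insert (M,N) (insert (M,N+1) W). snd w = j"
    proof (intro allI impI)
      fix j assume "j < N+2"
      then consider "j < N" | "j = N" | "j = N+1" by linarith
      then show "\<exists>w\<in>insert (M,N) (insert (M,N+1) W). snd w = j"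
        by cases (use g in \<open>auto simp: good_def\<close>)
    qed
    show "\<forall>w\<in>insert (M,N) (insert (M,N+1) W). \<exists>w'\<in>insert (M,N) (insert (M,N+1) W). w' \<noteq> w \<and> (fst w' = fst w \<or> snd w' = snd w)"
    proof
      fix w assume "w \<in> insert (M,N) (insert (M,N+1) W)"
      then consider "w = (M,N)" | "w = (M,N+1)" | "w \<in> W" by blast
      then show "\<exists>w'\<in>insert (M,N) (insert (M,N+1) W). w' \<noteq> w \<and> (fst w' = fst w \<or> snd w' = snd w)"
      proof cases
        case 3
        then obtain w' where "w' \<in> W" "w' \<noteq> w \<and> (fst w' = fst w \<or> snd w' = snd w)"
          using g by (auto simp: good_def)
        then show ?thesis by blast
      qed auto
    qed
  qed
qed

lemma base21: "good 2 1 {(0,0),(1,0)}"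
  unfolding good_def by (auto simp: less_Suc_eq numeral_eq_Suc)
lemma base12: "good 1 2 {(0,0),(0,1)}"
  unfolding good_def by (auto simp: less_Suc_eq numeral_eq_Suc)
lemma base22: "good 2 2 {(0,0),(0,1),(1,0)}"
  unfolding good_def by (auto simp: less_Suc_eq numeral_eq_Suc)
lemma base32: "good 3 2 {(0,0),(1,0),(2,0),(0,1)}"
  unfolding good_def by (auto simp: less_Suc_eq numeral_eq_Suc)
lemma base23: "good 2 3 {(0,0),(0,1),(0,2),(1,0)}"
  unfolding good_def by (auto simp: less_Suc_eq numeral_eq_Suc)

lemma construct:
  "1 \<le> M \<Longrightarrow> 1 \<le> N \<Longrightarrow> M \<le> 2*N \<Longrightarrow> N \<le> 2*M \<Longrightarrow> (M,N) \<noteq> (1,1) \<Longrightarrow>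
   \<exists>W. good M N W \<and> 3 * card W \<le> 2*(M+N)+2"
proof (induction "M+N" arbitrary: M N rule: less_induct)
  case less
  note hyp = less.prems
  show ?case
  proof (cases "N \<le> M")
    case NM: True
    show ?thesis
    proof (cases "M \<ge> 3 \<and> N \<ge> 2 \<and> (M,N) \<noteq> (3,2)")
      case True
      define M' where "M' = M - 2"
      define N' where "N' = N - 1"
      have MN: "M = M'+2" "N = N'+1" using True unfolding M'_def N'_def by auto
      have "\<exists>W. good M' N' W \<and> 3 * card W \<le> 2*(M'+N')+2"
        using less.hyps[of M' N'] True NM MN hyp by auto
      then obtain W where W: "good M' N' W" "3 * card W \<le> 2*(M'+N')+2" by blast
      show ?thesis using step1[OF W(1)] W(2) MN by (intro exI[of _ "insert (M',N') (insert (M'+1,N') W)"]) auto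
    next
      case False
      then have "(M,N) = (2,1) \<or> (M,N) = (2,2) \<or> (M,N) = (3,2)" using NM hyp by auto
      then show ?thesis
      proof (elim disjE)
        assume "(M,N) = (2,1)" then show ?thesis using base21 by (intro exI[of _ "{(0,0),(1,0)}"]) auto
      next
        assume "(M,N) = (2,2)" then show ?thesis using base22 by (intro exI[of _ "{(0,0),(0,1),(1,0)}"]) auto
      next
        assume "(M,N) = (3,2)" then show ?thesis using base32 by (intro exI[of _ "{(0,0),(1,0),(2,0),(0,1)}"]) auto
      qed
    qed
  next
    case NM: False
    show ?thesis
    proof (cases "N \<ge> 3 \<and> M \<ge> 2 \<and> (M,N) \<noteq> (2,3)")
      case True
      define M' where "M' = M - 1"
      define N' where "N' = N - 2"
      have MN: "M = M'+1" "N = N'+2" using True unfolding M'_def N'_def by auto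
      have "\<exists>W. good M' N' W \<and> 3 * card W \<le> 2*(M'+N')+2"
        using less.hyps[of M' N'] True NM MN hyp by auto
      then obtain W where W: "good M' N' W" "3 * card W \<le> 2*(M'+N')+2" by blast
      show ?thesis using step2[OF W(1)] W(2) MN by (intro exI[of _ "insert (M',N') (insert (M',N'+1) W)"]) auto
    next
      case False
      then have "(M,N) = (1,2) \<or> (M,N) = (2,3)" using NM hyp by auto
      then show ?thesis
      proof (elim disjE)
        assume "(M,N) = (1,2)" then show ?thesis using base12 by (intro exI[of _ "{(0,0),(0,1)}"]) auto
      next
        assume "(M,N) = (2,3)" then show ?thesis using base23 by (intro exI[of _ "{(0,0),(0,1),(0,2),(1,0)}"]) auto
      qed
    qed
  qed
qed




lemma dm3: "3 * ((x::nat) div 3) \<le> x" "x < 3 * (x div 3) + 3"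
proof -
  have "3 * (x div 3) + x mod 3 = x" by simp
  moreover have "x mod 3 < 3" by simp
  ultimately show "3 * ((x::nat) div 3) \<le> x" "x < 3 * (x div 3) + 3" by linarith+
qed
lemma h1: "2*(s::nat) \<le> 3*c+4 \<Longrightarrow> (2*(s-2)+2) div 3 \<le> c"
  using dm3[of "2*(s-2)+2"] by linarith
lemma h2: "3*(c::nat) \<le> 2*((m-1)+(n-1))+2 \<Longrightarrow> (2*(m+n-2)+2) div 3 \<le> c \<Longrightarrow> 3 \<le> m \<Longrightarrow> 1 \<le> n \<Longrightarrow> c = (2*(m+n-2)+2) div 3"
proof -
  assume a: "3*(c::nat) \<le> 2*((m-1)+(n-1))+2" "(2*(m+n-2)+2) div 3 \<le> c" "3 \<le> m" "1 \<le> n"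
  define q where "q = (2*(m+n-2)+2) div 3"
  have e: "(m-1)+(n-1) = m+n-2" using a(3,4) by simp
  have "3*c < 3*q+3" using dm3[of "2*(m+n-2)+2"] a(1) unfolding e q_def by linarith
  then have "c < q + 1" by linarith
  then show ?thesis using a(2) unfolding q_def by linarith
qed
lemma h3: "3*((2*(t::nat)+2) div 3) \<le> 2*t+2" "2*t \<le> 3*((2*t+2) div 3)"
  using dm3[of "2*t+2"] by linarith+

theorem proposition3p6:
  fixes m n :: nat
  assumes "m \<ge> 3" and "m \<le> n" and "n \<le> 2 * m - 2"
  shows "int (metric_dim (tensor_verts (complete_verts m) (complete_verts n))
                         (tensor_adj complete_adj complete_adj))
         = \<lceil>(2 / 3 :: real) * (real m + real n - 2)\<rceil>"
proof -
  let ?V = "tensor_verts (complete_verts m) (complete_verts n)"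
  let ?E = "tensor_adj complete_adj complete_adj"
  have m3: "m \<ge> 3" and n3: "n \<ge> 3" using assms by auto
  have V: "?V = {0..<m}\<times>{0..<n}" by (rule V_simp)
  have resiff: "resolving ?V ?E W \<longleftrightarrow> W \<subseteq> {0..<m}\<times>{0..<n} \<and>
      (\<forall>x\<in>{0..<m}\<times>{0..<n}. \<forall>y\<in>{0..<m}\<times>{0..<n}. (\<forall>w\<in>W. DD x w = DD y w) \<longrightarrow> x = y)" for W
  proof (cases "W \<subseteq> {0..<m}\<times>{0..<n}")
    case True
    have g: "\<And>x w. x \<in> {0..<m}\<times>{0..<n} \<Longrightarrow> w \<in> W \<Longrightarrow> gdist ({0..<m}\<times>{0..<n}) ?E x w = DD x w"
      using gdist_eq[OF m3 n3, unfolded V_simp] True by blast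
    show ?thesis unfolding resolving_def V using True by (simp add: g cong: ball_cong)
  next
    case False then show ?thesis unfolding resolving_def V by simp
  qed
  define K where "K = (2*(m+n-2)+2) div 3"
  have lowK: "K \<le> card W" if r: "resolving ?V ?E W" for W
  proof -
    have "2*(m+n) \<le> 3 * card W + 4"
      using lower[of W m n] r unfolding resiff using m3 n3 by auto
    then show ?thesis unfolding K_def using h1[of "m+n" "card W"] by blast
  qed
  obtain W0 where W0: "good (m-1) (n-1) W0" "3 * card W0 \<le> 2*((m-1)+(n-1))+2"
  proof -
    have "\<exists>W. good (m-1) (n-1) W \<and> 3 * card W \<le> 2*((m-1)+(n-1))+2"
      by (rule construct) (use assms in auto)
    then show ?thesis using that by blast
  qed
  have W0V: "W0 \<subseteq> {0..<m}\<times>{0..<n}" using W0(1) unfolding good_def by auto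
  have res0: "resolving ?V ?E W0"
    unfolding resiff
  proof (intro conjI W0V ballI impI)
    fix x y assume xy: "x \<in> {0..<m}\<times>{0..<n}" "y \<in> {0..<m}\<times>{0..<n}" "\<forall>w\<in>W0. DD x w = DD y w"
    show "x = y"
    proof (rule suff[OF W0V _ _ _ xy])
      fix i i' assume a: "i < m" "i' < m" "\<forall>w\<in>W0. fst w \<noteq> i" "\<forall>w\<in>W0. fst w \<noteq> i'"
      have "\<not> i < m - 1" "\<not> i' < m - 1" using W0(1) a(3,4) unfolding good_def by blast+
      then show "i = i'" using a(1,2) by linarith
    next
      fix i i' assume a: "i < n" "i' < n" "\<forall>w\<in>W0. snd w \<noteq> i" "\<forall>w\<in>W0. snd w \<noteq> i'"
      have "\<not> i < n - 1" "\<not> i' < n - 1" using W0(1) a(3,4) unfolding good_def by blast+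
      then show "i = i'" using a(1,2) by linarith
    next
      fix w assume "w \<in> W0"
      then show "\<exists>w'\<in>W0. w' \<noteq> w \<and> (fst w' = fst w \<or> snd w' = snd w)" using W0(1) unfolding good_def by blast
    qed
  qed
  have cardK: "card W0 = K"
    using h2[OF W0(2) lowK[OF res0, unfolded K_def] m3] n3 unfolding K_def by simp
  have fin0: "finite W0" using good_finite[OF W0(1)] .
  have md: "metric_dim ?V ?E = K"
    unfolding metric_dim_def
  proof (rule Least_equality)
    show "\<exists>W. finite W \<and> card W = K \<and> resolving ?V ?E W" using fin0 cardK res0 by blast
    show "\<And>k. \<exists>W. finite W \<and> card W = k \<and> resolving ?V ?E W \<Longrightarrow> K \<le> k" using lowK by blast
  qed
  define t where "t = m + n - 2"
  have rt: "real m + real n - 2 = real t" using m3 unfolding t_def by auto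
  have k1: "3 * K \<le> 2*t+2" "2*t \<le> 3*K" using h3[of "m+n-2"] unfolding K_def t_def by auto
  have r1: "3 * real K \<le> 2 * real t + 2" "2 * real t \<le> 3 * real K"
    using k1 by (simp_all add: of_nat_mult[symmetric] del: of_nat_mult)
  have "\<lceil>(2 / 3 :: real) * (real m + real n - 2)\<rceil> = int K"
    unfolding rt ceiling_eq_iff using r1 by auto
  then show ?thesis using md by simp
qed

end
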